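(* Let $f,g:(\mathbb{R}^n,0)\to(\mathbb{R}^p,0)$ be $C^\infty$ map-germs, $s:(\mathbb{R}^n,0)\to(\mathbb{R}^n,0)$ a germ of $C^\infty$ diffeomorphism and $M:(\mathbb{R}^n,0)\to(GL(p,\mathbb{R}),M(0))$ a $C^\infty$ map-germ with $f(x)=M(x)g(s(x))$. Let $F(x,\lambda)=f(x)-M(x)\lambda$ on $(\mathbb{R}^n\times\mathbb{R}^p_\lambda,(0,0))$ with values in $(\mathbb{R}^p_y,0)$, and suppose there are germs of bi-Lipschitz homeomorphisms $h(x,\lambda)=(h_1(x,\lambda),\lambda)$ of $(\mathbb{R}^n\times\mathbb{R}^p_\lambda,(0,0))$ and $H(y,\lambda)=(H_1(y,\lambda),\lambda)$ of $(\mathbb{R}^p_y\times\mathbb{R}^p_\lambda,(0,0))$ such that $H\circ(F,\pi)=(f,\pi)\circ h$, where $\pi(x,\lambda)=\lambda$. If the map-germ $(\mathbb{R}^p_\lambda,0)\to(\mathbb{R}^p_y,0)$, $\lambda\mapsto H_1(0,\lambda)$, is a germ of bi-Lipschitz homeomorphism, then the map-germ $(\mathbb{R}^n,0)\to(\mathbb{R}^n,0)$, $x\mapsto h_1(x,g(s(x)))$, is a germ of bi-Lipschitz homeomorphism.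
   Context: $\mathbb{R}^p_\lambda$ and $\mathbb{R}^p_y$ both denote $\mathbb{R}^p$, playing the role of parameter space and target space respectively. A bi-Lipschitz homeomorphism is a homeomorphism which is Lipschitz (i.e. $\|\varphi(x)-\varphi(y)\|\le c\|x-y\|$ for some $c>0$) and whose inverse is Lipschitz. *)

theory Defs
  imports "HOL-Analysis.Analysis"
begin

fun dderiv :: "'a list \<Rightarrow> ('a::real_normed_vector \<Rightarrow> 'b::real_normed_vector) \<Rightarrow> 'a \<Rightarrow> 'b" where
  "dderiv [] f = f"
| "dderiv (v # vs) f = (\<lambda>x. frechet_derivative (dderiv vs f) (at x) v)"

definition smooth_on :: "'a::real_normed_vector set \<Rightarrow> ('a \<Rightarrow> 'b::real_normed_vector) \<Rightarrow> bool" where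
  "smooth_on U f \<longleftrightarrow> (\<forall>vs. dderiv vs f differentiable_on U)"

definition smooth_germ :: "('a::real_normed_vector \<Rightarrow> 'b::real_normed_vector) \<Rightarrow> 'a \<Rightarrow> bool" where
  "smooth_germ f a \<longleftrightarrow> (\<exists>U. open U \<and> a \<in> U \<and> smooth_on U f)"

definition diffeo_germ :: "('a::real_normed_vector \<Rightarrow> 'b::real_normed_vector) \<Rightarrow> 'a \<Rightarrow> 'b \<Rightarrow> bool" where
  "diffeo_germ s a b \<longleftrightarrow> s a = b \<and>
     (\<exists>U V t. open U \<and> a \<in> U \<and> open V \<and> homeomorphism U V s t \<and> smooth_on U s \<and> smooth_on V t)"

definition bilip_germ :: "('a::metric_space \<Rightarrow> 'b::metric_space) \<Rightarrow> 'a \<Rightarrow> 'b \<Rightarrow> bool" where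
  "bilip_germ \<phi> a b \<longleftrightarrow> \<phi> a = b \<and>
     (\<exists>U V \<psi> C D. open U \<and> a \<in> U \<and> open V \<and> homeomorphism U V \<phi> \<psi> \<and>
        C-lipschitz_on U \<phi> \<and> D-lipschitz_on V \<psi>)"

end

theory Submission
  imports Defs
begin


lemma bilip_germI:
  assumes "\<phi> a = b" "\<psi> b = a"
    "open A" "a \<in> A" "C-lipschitz_on A \<phi>" "\<forall>x\<in>A. \<psi> (\<phi> x) = x"
    "open B" "b \<in> B" "D-lipschitz_on B \<psi>" "\<forall>y\<in>B. \<phi> (\<psi> y) = y"
  shows "bilip_germ \<phi> a b"
proof -
  have cA: "continuous_on A \<phi>" using assms(5) by (rule lipschitz_on_continuous_on)
  have cB: "continuous_on B \<psi>" using assms(9) by (rule lipschitz_on_continuous_on)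
  define U where "U = A \<inter> \<phi> -` B"
  define V where "V = B \<inter> \<psi> -` A"
  have "open U" unfolding U_def by (rule continuous_open_preimage[OF cA assms(3,7)])
  moreover have "open V" unfolding V_def by (rule continuous_open_preimage[OF cB assms(7,3)])
  moreover have "a \<in> U" "b \<in> V" using assms by (auto simp: U_def V_def)
  moreover have "homeomorphism U V \<phi> \<psi>"
    apply (rule homeomorphismI)
    using cA cB assms by (auto simp: U_def V_def intro: continuous_on_subset)
  moreover have "C-lipschitz_on U \<phi>" "D-lipschitz_on V \<psi>"
    using assms(5,9) by (auto simp: U_def V_def intro: lipschitz_on_subset)
  ultimately show ?thesis unfolding bilip_germ_def using assms(1) by blast
qed

lemma smooth_loclip:
  fixes f :: "'a::euclidean_space \<Rightarrow> 'b::real_normed_vector"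
  assumes "smooth_on U f" "open U" "a \<in> U"
  shows "\<exists>r>0. \<exists>C. C-lipschitz_on (ball a r) f"
proof -
  obtain r where r: "r > 0" "cball a r \<subseteq> U" using assms(2,3) open_contains_cball by blast
  have diff: "f differentiable_on U" using assms(1) unfolding smooth_on_def
    by (metis dderiv.simps(1))
  have "\<forall>b\<in>Basis. \<exists>B. \<forall>x\<in>cball a r. norm (frechet_derivative f (at x) b) \<le> B"
  proof
    fix b :: 'a assume "b \<in> Basis"
    have "dderiv [b] f differentiable_on U" using assms(1) unfolding smooth_on_def by blast
    hence "continuous_on U (\<lambda>x. frechet_derivative f (at x) b)"
      by (simp add: differentiable_imp_continuous_on)
    hence "continuous_on (cball a r) (\<lambda>x. frechet_derivative f (at x) b)"
      using r(2) continuous_on_subset by blast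
    hence "compact ((\<lambda>x. frechet_derivative f (at x) b) ` cball a r)"
      by (intro compact_continuous_image) auto
    then show "\<exists>B. \<forall>x\<in>cball a r. norm (frechet_derivative f (at x) b) \<le> B"
      using compact_imp_bounded bounded_iff by (metis imageI)
  qed
  then obtain B where B: "\<And>b x. b \<in> Basis \<Longrightarrow> x \<in> cball a r \<Longrightarrow> norm (frechet_derivative f (at x) b) \<le> B b"
    by metis
  define K where "K = (\<Sum>b\<in>Basis. B b)"
  have Bnn: "b \<in> Basis \<Longrightarrow> 0 \<le> B b" for b
    using B[of b a] r(1) by (meson centre_in_cball less_imp_le norm_ge_zero order_trans)
  have K0: "0 \<le> K" unfolding K_def using Bnn by (simp add: sum_nonneg)
  have der: "(f has_derivative frechet_derivative f (at x)) (at x)" if "x \<in> cball a r" for x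
    using diff r(2) that assms(2)
    by (meson differentiable_on_eq_differentiable_at frechet_derivative_works subsetD)
  have on: "onorm (frechet_derivative f (at x)) \<le> K" if x: "x \<in> cball a r" for x
  proof (rule onorm_le)
    fix v :: 'a
    have lin: "linear (frechet_derivative f (at x))" using der[OF x] has_derivative_linear by blast
    have "frechet_derivative f (at x) v = frechet_derivative f (at x) (\<Sum>b\<in>Basis. (v \<bullet> b) *\<^sub>R b)"
      by (simp add: euclidean_representation)
    also have "\<dots> = (\<Sum>b\<in>Basis. (v \<bullet> b) *\<^sub>R frechet_derivative f (at x) b)"
      using lin by (simp add: linear_sum linear_scale)
    finally have "norm (frechet_derivative f (at x) v) \<le> (\<Sum>b\<in>Basis. norm ((v \<bullet> b) *\<^sub>R frechet_derivative f (at x) b))"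
      by (metis norm_sum)
    also have "\<dots> \<le> (\<Sum>b\<in>Basis. norm v * B b)"
    proof (rule sum_mono)
      fix b :: 'a assume bB: "b \<in> Basis"
      have "norm ((v \<bullet> b) *\<^sub>R frechet_derivative f (at x) b) = \<bar>v \<bullet> b\<bar> * norm (frechet_derivative f (at x) b)" by simp
      also have "\<dots> \<le> norm v * B b"
        by (intro mult_mono Basis_le_norm bB B x Bnn) auto
      finally show "norm ((v \<bullet> b) *\<^sub>R frechet_derivative f (at x) b) \<le> norm v * B b" .
    qed
    also have "\<dots> = K * norm v" unfolding K_def by (simp add: sum_distrib_left mult.commute)
    finally show "norm (frechet_derivative f (at x) v) \<le> K * norm v" .
  qed
  have "K-lipschitz_on (ball a r) f"
  proof (rule lipschitz_onI[OF _ K0])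
    fix x y assume "x \<in> ball a r" "y \<in> ball a r"
    moreover have "\<And>z. z \<in> ball a r \<Longrightarrow> (f has_derivative frechet_derivative f (at z)) (at z within ball a r)"
      using der by (auto intro: has_derivative_at_withinI)
    moreover have "\<And>z. z \<in> ball a r \<Longrightarrow> onorm (frechet_derivative f (at z)) \<le> K"
      using on by auto
    ultimately show "dist (f x) (f y) \<le> K * dist x y"
      using differentiable_bound[of "ball a r" f "\<lambda>x. frechet_derivative f (at x)" K x y]
      by (auto simp: dist_norm)
  qed
  with r show ?thesis by blast
qed


lemma isCont_mv:
  fixes M :: "'a::t2_space \<Rightarrow> real^'n^'m" and v :: "'a \<Rightarrow> real^'n"
  assumes "isCont M a" "isCont v a"
  shows "isCont (\<lambda>x. M x *v v x) a"
  using assms unfolding isCont_def matrix_vector_mult_def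
  by (auto intro!: tendsto_vec_lambda tendsto_sum tendsto_mult tendsto_vec_nth)

lemma lip_pair:
  fixes q :: "'a::metric_space \<Rightarrow> 'b::metric_space"
  assumes "C-lipschitz_on A q"
  shows "(1+C)-lipschitz_on A (\<lambda>x. (x, q x))"
proof (rule lipschitz_onI)
  show "0 \<le> 1 + C" using lipschitz_on_nonneg[OF assms] by simp
  fix x y assume xy: "x \<in> A" "y \<in> A"
  have q: "dist (q x) (q y) \<le> C * dist x y" using assms xy by (simp add: lipschitz_on_def)
  have "dist (x, q x) (y, q y) = sqrt ((dist x y)\<^sup>2 + (dist (q x) (q y))\<^sup>2)"
    by (simp add: dist_Pair_Pair)
  also have "\<dots> \<le> dist x y + dist (q x) (q y)"
    by (rule real_le_lsqrt) (auto simp: power2_eq_square algebra_simps)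
  also have "\<dots> \<le> (1 + C) * dist x y" using q by (simp add: algebra_simps)
  finally show "dist (x, q x) (y, q y) \<le> (1 + C) * dist x y" .
qed

lemma lip_fst:
  assumes "C-lipschitz_on A q"
  shows "C-lipschitz_on A (\<lambda>x. fst (q x))"
  using assms unfolding lipschitz_on_def by (meson dist_fst_le order_trans)


lemma smooth_germ_isCont:
  assumes "smooth_germ f a" shows "isCont f a"
proof -
  from assms obtain U where U: "open U" "a \<in> U" "smooth_on U f" unfolding smooth_germ_def by blast
  have "f differentiable_on U" using U(3) unfolding smooth_on_def by (metis dderiv.simps(1))
  hence "continuous_on U f" by (rule differentiable_imp_continuous_on)
  thus ?thesis using U continuous_on_eq_continuous_at by blast
qed

lemma smooth_germ_lip:
  fixes f :: "'a::euclidean_space \<Rightarrow> 'b::real_normed_vector"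
  assumes "smooth_germ f a" shows "\<exists>r>0. \<exists>C. C-lipschitz_on (ball a r) f"
  using assms smooth_loclip unfolding smooth_germ_def by blast

lemma nh: "(q \<longlongrightarrow> c) (nhds a)" if "isCont q a" "q a = c"
  for q :: "'x::metric_space \<Rightarrow> 'y::metric_space" and a c
  using that tendsto_at_iff_tendsto_nhds isCont_def by metis

theorem lemma3p3:
  fixes f g :: "real^'n \<Rightarrow> real^'p"
    and s :: "real^'n \<Rightarrow> real^'n"
    and M :: "real^'n \<Rightarrow> real^'p^'p"
    and h1 :: "real^'n \<Rightarrow> real^'p \<Rightarrow> real^'n"
    and H1 :: "real^'p \<Rightarrow> real^'p \<Rightarrow> real^'p"
  assumes f: "smooth_germ f 0" "f 0 = 0"
    and g: "smooth_germ g 0" "g 0 = 0"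
    and s: "diffeo_germ s 0 0"
    and M: "smooth_germ M 0" "\<forall>\<^sub>F x in nhds 0. invertible (M x)"
    and fMg: "\<forall>\<^sub>F x in nhds 0. f x = M x *v g (s x)"
    and h: "bilip_germ (\<lambda>(x, l). (h1 x l, l)) (0, 0) (0, 0)"
    and H: "bilip_germ (\<lambda>(y, l). (H1 y l, l)) (0, 0) (0, 0)"
    and comm: "\<forall>\<^sub>F z in nhds (0, 0).
                 H1 (f (fst z) - M (fst z) *v snd z) (snd z) = f (h1 (fst z) (snd z))"
    and H0: "bilip_germ (\<lambda>l. H1 0 l) 0 0"
  shows "bilip_germ (\<lambda>x. h1 x (g (s x))) 0 0"
proof -
  define hh where "hh = (\<lambda>(x::real^'n, l::real^'p). (h1 x l, l))"
  define HH where "HH = (\<lambda>(y::real^'p, l::real^'p). (H1 y l, l))"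
  from h obtain Uh Vh kk Ch Dh where hU: "open Uh" "(0,0) \<in> Uh" "open Vh"
    and hhom: "homeomorphism Uh Vh hh kk" and hlip: "Ch-lipschitz_on Uh hh" "Dh-lipschitz_on Vh kk"
    and h00': "hh (0,0) = (0,0)"
    unfolding bilip_germ_def hh_def by blast
  from H obtain UH VH KK where HU: "open UH" "(0,0) \<in> UH" and Hhom: "homeomorphism UH VH HH KK"
    unfolding bilip_germ_def HH_def by blast
  from H0 obtain U0 V0 G D0 where H00: "H1 0 0 = 0" and U0: "open U0" "0 \<in> U0" "open V0"
    and hom0: "homeomorphism U0 V0 (\<lambda>l. H1 0 l) G" and Glip: "D0-lipschitz_on V0 G"
    unfolding bilip_germ_def by blast
  have h00: "h1 0 0 = 0" using h00' by (simp add: hh_def)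
  have kk0: "kk (0,0) = (0,0)"
    using homeomorphism_apply1[OF hhom hU(2)] h00' by simp
  have Vh0: "(0,0) \<in> Vh" using homeomorphism_image1[OF hhom] hU(2) h00' by force
  have G0: "G 0 = 0" using homeomorphism_apply1[OF hom0 U0(2)] H00 by simp
  have V00: "0 \<in> V0" using homeomorphism_image1[OF hom0] U0(2) H00 by force
  have ckk: "isCont kk (0,0)"
    using homeomorphism_cont2[OF hhom] hU(3) Vh0 continuous_on_eq_continuous_at by blast
  have cG: "isCont G 0"
    using homeomorphism_cont2[OF hom0] U0(3) V00 continuous_on_eq_continuous_at by blast
  have HHinj: "a = b" if "a \<in> UH" "b \<in> UH" "HH a = HH b" for a b
    using homeomorphism_apply1[OF Hhom that(1)] homeomorphism_apply1[OF Hhom that(2)] that(3) by metis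
  from s obtain Us where s0: "s 0 = 0" and Us: "open Us" "0 \<in> Us" "smooth_on Us s"
    unfolding diffeo_germ_def by blast
  have sg: "smooth_germ s 0" using Us unfolding smooth_germ_def by blast
  obtain rf Lf where rf: "rf > 0" "Lf-lipschitz_on (ball 0 rf) f" using smooth_germ_lip[OF f(1)] by blast
  obtain rg Lg where rg: "rg > 0" "Lg-lipschitz_on (ball 0 rg) g" using smooth_germ_lip[OF g(1)] by blast
  obtain rs Ls where rs: "rs > 0" "Ls-lipschitz_on (ball 0 rs) s" using smooth_germ_lip[OF sg] by blast
  have cf: "isCont f 0" and cg: "isCont g 0" and cs: "isCont s 0" and cM: "isCont M 0"
    using smooth_germ_isCont f(1) g(1) sg M(1) by auto
  have cgs: "isCont (\<lambda>x. g (s x)) 0" using isCont_o2[OF cs] cg s0 by simp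
  have Ts: "(s \<longlongrightarrow> 0) (nhds 0)" by (rule nh[OF cs s0])
  have Tgs: "((\<lambda>x. g (s x)) \<longlongrightarrow> 0) (nhds 0)" by (rule nh[OF cgs]) (simp add: s0 g(2))
  have T1: "((\<lambda>x. (x, g (s x))) \<longlongrightarrow> (0,0)) (nhds 0)"
    by (rule nh) (auto simp: cgs s0 g(2))
  
  have "\<forall>\<^sub>F x in nhds 0. (x, g (s x)) \<in> Uh \<and>
      H1 (f x - M x *v g (s x)) (g (s x)) = f (h1 x (g (s x))) \<and> f x = M x *v g (s x) \<and>
      g (s x) \<in> U0 \<and> x \<in> ball 0 rs \<and> s x \<in> ball 0 rg"
  proof (intro eventually_conj)
    show "\<forall>\<^sub>F x in nhds 0. (x, g (s x)) \<in> Uh"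
      using eventually_compose_filterlim[OF eventually_nhds_in_open[OF hU(1,2)] T1] .
    show "\<forall>\<^sub>F x in nhds 0. H1 (f x - M x *v g (s x)) (g (s x)) = f (h1 x (g (s x)))"
      using eventually_compose_filterlim[OF comm T1] by simp
    show "\<forall>\<^sub>F x in nhds 0. f x = M x *v g (s x)" by (rule fMg)
    show "\<forall>\<^sub>F x in nhds 0. g (s x) \<in> U0"
      using eventually_compose_filterlim[OF eventually_nhds_in_open[OF U0(1,2)] Tgs] .
    show "\<forall>\<^sub>F x in nhds 0. x \<in> ball 0 rs"
      using eventually_nhds_in_open[of "ball 0 rs" 0] rs(1) by simp
    show "\<forall>\<^sub>F x in nhds 0. s x \<in> ball 0 rg"
      using eventually_compose_filterlim[OF eventually_nhds_in_open[of "ball 0 rg" 0] Ts] rg(1) by simp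
  qed
  then obtain dA where dA: "dA > 0" and PA: "\<And>x. x \<in> ball 0 dA \<Longrightarrow> (x, g (s x)) \<in> Uh \<and>
      H1 (f x - M x *v g (s x)) (g (s x)) = f (h1 x (g (s x))) \<and> f x = M x *v g (s x) \<and>
      g (s x) \<in> U0 \<and> x \<in> ball 0 rs \<and> s x \<in> ball 0 rg"
    unfolding eventually_nhds_metric by (auto simp: dist_commute)
  have lipA: "((Ch * (1 + Lg * Ls)))-lipschitz_on (ball 0 dA) (\<lambda>x. h1 x (g (s x)))"
  proof -
    have l1: "Ls-lipschitz_on (ball 0 dA) s" using PA by (blast intro: lipschitz_on_subset[OF rs(2)])
    have l2: "Lg-lipschitz_on (s ` ball 0 dA) g" using PA by (blast intro: lipschitz_on_subset[OF rg(2)])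
    have l3: "(1 + Lg * Ls)-lipschitz_on (ball 0 dA) (\<lambda>x. (x, g (s x)))"
      by (rule lip_pair[OF lipschitz_on_compose2[OF l1 l2]])
    have l4: "Ch-lipschitz_on ((\<lambda>x. (x, g (s x))) ` ball 0 dA) hh"
      using PA by (blast intro: lipschitz_on_subset[OF hlip(1)])
    show ?thesis using lip_fst[OF lipschitz_on_compose2[OF l3 l4]] by (simp add: hh_def)
  qed
  have invA: "fst (kk (h1 x (g (s x)), G (f (h1 x (g (s x)))))) = x" if x: "x \<in> ball 0 dA" for x
  proof -
    note P = PA[OF x]
    have "f (h1 x (g (s x))) = H1 0 (g (s x))" using P by (metis diff_self)
    hence "G (f (h1 x (g (s x)))) = g (s x)" using homeomorphism_apply1[OF hom0] P by simp
    moreover have "kk (hh (x, g (s x))) = (x, g (s x))" using homeomorphism_apply1[OF hhom] P by blast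
    ultimately show ?thesis by (simp add: hh_def)
  qed
  
  define w where "w y = kk (y, G (f y))" for y
  have cGf: "isCont (\<lambda>y. G (f y)) 0" using isCont_o2[OF cf, of G] cG f(2) by simp
  have cp: "isCont (\<lambda>y. (y, G (f y))) 0" using cGf by (intro isCont_Pair continuous_ident)
  have cw: "isCont w 0" unfolding w_def using isCont_o2[OF cp] ckk f(2) G0 by simp
  have w0: "w 0 = (0,0)" by (simp add: w_def f(2) G0 kk0)
  have Tw: "(w \<longlongrightarrow> (0,0)) (nhds 0)" by (rule nh[OF cw w0])
  have Tp: "((\<lambda>y. (y, G (f y))) \<longlongrightarrow> (0,0)) (nhds 0)" by (rule nh[OF cp]) (simp add: f(2) G0)
  have Tf: "(f \<longlongrightarrow> 0) (nhds 0)" by (rule nh[OF cf f(2)])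
  have cfw: "isCont (\<lambda>y. fst (w y)) 0" using cw by (intro continuous_intros)
  have Tfw: "((\<lambda>y. fst (w y)) \<longlongrightarrow> 0) (nhds 0)" by (rule nh[OF cfw]) (simp add: w0)
  define e where "e z = (f (fst z) - M (fst z) *v snd z, snd z)" for z :: "(real^'n) \<times> (real^'p)"
  have ce: "isCont e (0,0)" unfolding e_def
  proof (intro isCont_Pair continuous_intros isCont_mv)
    show "isCont (\<lambda>z. f (fst z)) (0, 0)" by (rule isCont_o2[where f=fst]) (auto intro: continuous_intros simp: cf)
    show "isCont (\<lambda>z. M (fst z)) (0, 0)" by (rule isCont_o2[where f=fst]) (auto intro: continuous_intros simp: cM)
  qed
  have cew: "isCont (\<lambda>y. e (w y)) 0" using isCont_o2[OF cw] ce w0 by simp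
  have Tew: "((\<lambda>y. e (w y)) \<longlongrightarrow> (0,0)) (nhds 0)" by (rule nh[OF cew]) (simp add: w0 e_def f(2))
  have c0w: "isCont (\<lambda>y. (0::real^'p, snd (w y))) 0" using cw by (intro continuous_intros)
  have T0w: "((\<lambda>y. (0::real^'p, snd (w y))) \<longlongrightarrow> (0,0)) (nhds 0)" by (rule nh[OF c0w]) (simp add: w0)
  have "\<forall>\<^sub>F y in nhds 0. f y \<in> V0 \<and> (y, G (f y)) \<in> Vh \<and>
      H1 (f (fst (w y)) - M (fst (w y)) *v snd (w y)) (snd (w y)) = f (h1 (fst (w y)) (snd (w y))) \<and>
      f (fst (w y)) = M (fst (w y)) *v g (s (fst (w y))) \<and> invertible (M (fst (w y))) \<and>
      e (w y) \<in> UH \<and> (0, snd (w y)) \<in> UH \<and> y \<in> ball 0 rf"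
  proof (intro eventually_conj)
    show "\<forall>\<^sub>F y in nhds 0. f y \<in> V0"
      using eventually_compose_filterlim[OF eventually_nhds_in_open[OF U0(3) V00] Tf] .
    show "\<forall>\<^sub>F y in nhds 0. (y, G (f y)) \<in> Vh"
      using eventually_compose_filterlim[OF eventually_nhds_in_open[OF hU(3) Vh0] Tp] .
    show "\<forall>\<^sub>F y in nhds 0. H1 (f (fst (w y)) - M (fst (w y)) *v snd (w y)) (snd (w y)) = f (h1 (fst (w y)) (snd (w y)))"
      using eventually_compose_filterlim[OF comm Tw] .
    show "\<forall>\<^sub>F y in nhds 0. f (fst (w y)) = M (fst (w y)) *v g (s (fst (w y)))"
      using eventually_compose_filterlim[OF fMg Tfw] .
    show "\<forall>\<^sub>F y in nhds 0. invertible (M (fst (w y)))"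
      using eventually_compose_filterlim[OF M(2) Tfw] .
    show "\<forall>\<^sub>F y in nhds 0. e (w y) \<in> UH"
      using eventually_compose_filterlim[OF eventually_nhds_in_open[OF HU] Tew] .
    show "\<forall>\<^sub>F y in nhds 0. (0, snd (w y)) \<in> UH"
      using eventually_compose_filterlim[OF eventually_nhds_in_open[OF HU] T0w] .
    show "\<forall>\<^sub>F y in nhds 0. y \<in> ball 0 rf"
      using eventually_nhds_in_open[of "ball 0 rf" 0] rf(1) by simp
  qed
  then obtain dB where dB: "dB > 0" and PB: "\<And>y. y \<in> ball 0 dB \<Longrightarrow> f y \<in> V0 \<and> (y, G (f y)) \<in> Vh \<and>
      H1 (f (fst (w y)) - M (fst (w y)) *v snd (w y)) (snd (w y)) = f (h1 (fst (w y)) (snd (w y))) \<and>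
      f (fst (w y)) = M (fst (w y)) *v g (s (fst (w y))) \<and> invertible (M (fst (w y))) \<and>
      e (w y) \<in> UH \<and> (0, snd (w y)) \<in> UH \<and> y \<in> ball 0 rf"
    unfolding eventually_nhds_metric by (auto simp: dist_commute)
  have lipB: "(Dh * (1 + D0 * Lf))-lipschitz_on (ball 0 dB) (\<lambda>y. fst (kk (y, G (f y))))"
  proof -
    have l1: "Lf-lipschitz_on (ball 0 dB) f" using PB by (blast intro: lipschitz_on_subset[OF rf(2)])
    have l2: "D0-lipschitz_on (f ` ball 0 dB) G" using PB by (blast intro: lipschitz_on_subset[OF Glip])
    have l3: "(1 + D0 * Lf)-lipschitz_on (ball 0 dB) (\<lambda>y. (y, G (f y)))"
      by (rule lip_pair[OF lipschitz_on_compose2[OF l1 l2]])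
    have l4: "Dh-lipschitz_on ((\<lambda>y. (y, G (f y))) ` ball 0 dB) kk"
      using PB by (blast intro: lipschitz_on_subset[OF hlip(2)])
    show ?thesis using lip_fst[OF lipschitz_on_compose2[OF l3 l4]] by simp
  qed
  have invB: "h1 (fst (kk (y, G (f y)))) (g (s (fst (kk (y, G (f y)))))) = y" if y: "y \<in> ball 0 dB" for y
  proof -
    note P = PB[OF y]
    define l where "l = G (f y)"
    define x where "x = fst (w y)"
    have hk: "hh (kk (y, l)) = (y, l)" using homeomorphism_apply2[OF hhom] P by (simp add: l_def)
    have wy: "w y = (x, l)" and hx: "h1 x l = y"
      using hk by (auto simp: hh_def x_def w_def l_def split: prod.splits)
    have H0l: "H1 0 l = f y" using homeomorphism_apply2[OF hom0] P by (simp add: l_def)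
    have c0: "H1 (f (fst (w y)) - M (fst (w y)) *v snd (w y)) (snd (w y)) = f (h1 (fst (w y)) (snd (w y)))"
      using P by blast
    have c: "H1 (f x - M x *v l) l = f y" using c0 wy hx by simp
    have "HH (f x - M x *v l, l) = HH (0, l)" using c H0l by (simp add: HH_def)
    have eU: "e (w y) \<in> UH" and zU: "(0, snd (w y)) \<in> UH" and fm: "f (fst (w y)) = M (fst (w y)) *v g (s (fst (w y)))"
      using P by blast+
    have eU': "(f x - M x *v l, l) \<in> UH" using eU wy by (simp only: e_def fst_conv snd_conv)
    have zU': "(0, l) \<in> UH" using zU wy by simp
    have fm': "f x = M x *v g (s x)" using fm wy by simp
    have "(f x - M x *v l, l) = (0, l)" by (rule HHinj[OF eU' zU']) fact
    hence "f x - M x *v l = 0" by simp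
    hence "M x *v l = M x *v g (s x)" using fm' by (metis eq_iff_diff_eq_0)
    moreover have "invertible (M x)" using P wy by (metis fst_conv)
    hence "inj ((*v) (M x))" unfolding invertible_def using matrix_left_invertible_injective by blast
    ultimately have "l = g (s x)" by (meson injD)
    thus ?thesis using hx wy by (simp add: w_def x_def)
  qed
  show ?thesis
  proof (rule bilip_germI[where \<psi> = "\<lambda>y. fst (kk (y, G (f y)))"])
    show "h1 0 (g (s 0)) = 0" by (simp add: s0 g(2) h00)
    show "fst (kk (0, G (f 0))) = 0" by (simp add: f(2) G0 kk0)
  qed (use dA dB lipA lipB invA invB in auto)
qed
end
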